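(* Let $g$ be an entire function, $\delta\neq0$, $x_1,\dots,x_k\in\mathbb C$, and $0<r<R$ with $|\delta|r<R-r$. Let $G(z,w)=(g(z)-\delta w,z)$. Let $i,\ell,j\in\{1,\dots,k\}$ be such that there is a domain $W\subset\mathbb D_r(x_i)$ mapped by $g$ biholomorphically onto $\mathbb D_R(x_j+\delta x_\ell)$. Then for every $(i,\ell)$-disk $D$ there exists a holomorphic disk $V\subset D$ (of the form $V=D\cap(\tilde W\times\mathbb C)$ for a domain $\tilde W\subset W$) such that $G(V)$ is a $(j,i)$-disk.
   Context: $\mathbb D_\rho(a)$ denotes the open disk of radius $\rho$ centered at $a$, and $\pi_w(z,w)=w$. For $i,\ell\in\{1,\dots,k\}$, an $(i,\ell)$-disk is a set $D=\{(z,\phi(z)):z\in\mathbb D_r(x_i)\}\subset\mathbb C^2$ where $\phi$ is holomorphic on $\mathbb D_r(x_i)$ (a holomorphic graph over $\mathbb D_r(x_i)$ in the $z$-coordinate), such that $\pi_w(D)\subset\mathbb D_r(x_\ell)$. *)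

theory Defs
  imports "HOL-Complex_Analysis.Complex_Analysis"
begin

definition il_disk :: "(nat \<Rightarrow> complex) \<Rightarrow> real \<Rightarrow> nat \<Rightarrow> nat \<Rightarrow> (complex \<times> complex) set \<Rightarrow> bool" where
  "il_disk x r i l D \<longleftrightarrow>
     (\<exists>\<phi>. \<phi> holomorphic_on ball (x i) r \<and>
          D = (\<lambda>z. (z, \<phi> z)) ` ball (x i) r \<and>
          snd ` D \<subseteq> ball (x l) r)"

definition domain :: "complex set \<Rightarrow> bool" where
  "domain U \<longleftrightarrow> open U \<and> connected U \<and> U \<noteq> {}"

definition biholo_onto :: "(complex \<Rightarrow> complex) \<Rightarrow> complex set \<Rightarrow> complex set \<Rightarrow> bool" where
  "biholo_onto g U T \<longleftrightarrow> g holomorphic_on U \<and> g ` U = T \<and>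
     (\<exists>h. h holomorphic_on T \<and> h ` T = U \<and> (\<forall>z\<in>U. h (g z) = z) \<and> (\<forall>w\<in>T. g (h w) = w))"

definition holo_disk :: "(complex \<times> complex) set \<Rightarrow> bool" where
  "holo_disk V \<longleftrightarrow> (\<exists>U \<phi>. domain U \<and> \<phi> holomorphic_on U \<and> V = (\<lambda>z. (z, \<phi> z)) ` U)"

end

theory Submission imports Defs "HOL-Complex_Analysis.Complex_Analysis" begin

lemma disc_unique:
  fixes F :: "complex \<Rightarrow> complex"
  assumes holF: "F holomorphic_on ball 0 1" and m1: "m < 1"
    and Fb: "\<And>z. z \<in> ball 0 1 \<Longrightarrow> norm (F z) \<le> m"
    and a: "a \<in> ball 0 1" and b: "b \<in> ball 0 1" and Fa: "F a = a" and Fbb: "F b = b"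
  shows "a = b"
proof -
  define M where "M = Moebius_function 0 a"
  define N where "N = Moebius_function 0 (-a)"
  have na: "norm a < 1" using a by simp
  have "norm (F 0) \<le> m" using Fb by simp
  then have m0: "0 \<le> m" by (meson norm_ge_zero order_trans)
  have holM: "M holomorphic_on ball 0 1" unfolding M_def using Moebius_function_holomorphic na by blast
  have holN: "N holomorphic_on ball 0 1" unfolding N_def using Moebius_function_holomorphic na by simp
  have cb: "cball 0 m \<subseteq> ball (0::complex) 1" using m1 by auto
  have contM: "continuous_on (cball 0 m) (\<lambda>z. norm (M z))"
    by (intro continuous_intros holomorphic_on_imp_continuous_on holomorphic_on_subset[OF holM cb])
  obtain z0 where z0: "z0 \<in> cball 0 m" and z0max: "\<forall>y\<in>cball 0 m. norm (M y) \<le> norm (M z0)"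
    using continuous_attains_sup[OF compact_cball _ contM] m0 by fastforce
  define m' where "m' = norm (M z0)"
  have m'1: "m' < 1" unfolding m'_def M_def
    using Moebius_function_norm_lt_1[OF na] z0 m1 by simp
  define m'' where "m'' = (1 + m') / 2"
  have m''pos: "0 < m''" "m'' < 1" "m' < m''" proof -
    have "0 \<le> m'" unfolding m'_def by simp
    then show "0 < m''" "m'' < 1" "m' < m''" using m'1 unfolding m''_def by auto
  qed
  define H where "H = (\<lambda>z. M (F (N z)) / m'')"
  have Nin: "N z \<in> ball 0 1" if "z \<in> ball 0 1" for z
    unfolding N_def using Moebius_function_norm_lt_1[of "-a" z] na that by simp
  have Fin: "F z \<in> cball 0 m" if "z \<in> ball 0 1" for z using Fb[OF that] by simp
  have holH: "H holomorphic_on ball 0 1"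
  proof -
    have "(M \<circ> (F \<circ> N)) holomorphic_on ball 0 1"
      apply (rule holomorphic_on_compose_gen[OF holomorphic_on_compose_gen[OF holN holF] holM])
      using Nin Fin cb apply blast
      using Nin Fin cb by auto
    then show ?thesis unfolding H_def using m''pos by (auto intro!: holomorphic_intros simp: o_def)
  qed
  have N0: "N 0 = a" unfolding N_def by (simp add: Moebius_function_of_zero)
  have Ma: "M a = 0" unfolding M_def by (simp add: Moebius_function_eq_zero)
  have H0: "H 0 = 0" unfolding H_def using N0 Fa Ma by simp
  have Hlt: "norm (H z) < 1" if "norm z < 1" for z
  proof -
    have "norm (M (F (N z))) \<le> m'" unfolding m'_def using z0max Fin Nin that by simp
    then show ?thesis unfolding H_def using m''pos by (simp add: norm_divide)
  qed
  define \<zeta> where "\<zeta> = M b"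
  have nb: "norm b < 1" using b by simp
  have \<zeta>in: "norm \<zeta> < 1" unfolding \<zeta>_def M_def using Moebius_function_norm_lt_1[OF na nb] by simp
  have NM: "N (M b) = b" unfolding N_def M_def using Moebius_function_compose[of "-a" a b] na nb by simp
  have "norm (H \<zeta>) \<le> norm \<zeta>" using Schwarz_Lemma(1)[OF holH H0 Hlt \<zeta>in] by simp
  moreover have "H \<zeta> = \<zeta> / m''" unfolding H_def \<zeta>_def using NM Fbb by simp
  ultimately have "norm \<zeta> / m'' \<le> norm \<zeta>" using m''pos by (simp add: norm_divide)
  then have "norm \<zeta> \<le> m'' * norm \<zeta>" using m''pos by (simp add: divide_le_eq mult.commute)
  then have "(1 - m'') * norm \<zeta> \<le> 0" by (simp add: algebra_simps)
  then have "norm \<zeta> = 0" using m''pos norm_ge_zero[of \<zeta>]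
    by (simp add: mult_le_0_iff)
  then have "M b = 0" unfolding \<zeta>_def by simp
  then show ?thesis using NM N0 by simp
qed

lemma ball_unique:
  fixes f :: "complex \<Rightarrow> complex"
  assumes holf: "f holomorphic_on ball c R" and R: "0 < R" and rho: "\<rho> < R"
    and fb: "\<And>u. u \<in> ball c R \<Longrightarrow> dist c (f u) \<le> \<rho>"
    and a: "a \<in> ball c R" and b: "b \<in> ball c R" and fa: "f a = a" and fbb: "f b = b"
  shows "a = b"
proof -
  define F where "F = (\<lambda>z. (f (c + of_real R * z) - c) / of_real R)"
  have inb: "c + of_real R * z \<in> ball c R" if "z \<in> ball 0 1" for z
    using that R by (simp add: dist_norm norm_mult)
  have "(f \<circ> (\<lambda>z. c + of_real R * z)) holomorphic_on ball 0 1"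
    by (rule holomorphic_on_compose_gen[OF _ holf]) (use inb in \<open>auto intro!: holomorphic_intros\<close>)
  then have holF: "F holomorphic_on ball 0 1" unfolding F_def using R
    by (auto intro!: holomorphic_intros simp: o_def)
  have Fb: "norm (F z) \<le> \<rho> / R" if "z \<in> ball 0 1" for z
    using fb[OF inb[OF that]] R unfolding F_def
    by (simp add: norm_divide dist_norm norm_minus_commute divide_right_mono)
  have a': "(a - c) / of_real R \<in> ball 0 1" "(b - c) / of_real R \<in> ball 0 1"
    using a b R by (auto simp: dist_norm norm_divide norm_minus_commute)
  have ra: "c + of_real R * ((a - c) / of_real R) = a" "c + of_real R * ((b - c) / of_real R) = b"
    using R by auto
  have "(a - c) / of_real R = (b - c) / of_real R"
    by (rule disc_unique[OF holF _ Fb a']) (use rho R ra fa fbb in \<open>auto simp: F_def\<close>)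
  then show ?thesis using R by (simp add: divide_cancel_right)
qed


theorem mainTheorem12:
  fixes g :: "complex \<Rightarrow> complex" and \<delta> :: complex and x :: "nat \<Rightarrow> complex"
    and k :: nat and r R :: real and i l j :: nat and W :: "complex set"
  assumes "g holomorphic_on UNIV"
    and "\<delta> \<noteq> 0"
    and "0 < r" and "r < R" and "cmod \<delta> * r < R - r"
    and "i \<in> {1..k}" and "l \<in> {1..k}" and "j \<in> {1..k}"
    and "domain W" and "W \<subseteq> ball (x i) r"
    and "biholo_onto g W (ball (x j + \<delta> * x l) R)"
  shows "\<forall>D. il_disk x r i l D \<longrightarrow>
           (\<exists>W' V. domain W' \<and> W' \<subseteq> W \<and> V = D \<inter> (W' \<times> UNIV) \<and>
              holo_disk V \<and> V \<subseteq> D \<and>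
              il_disk x r j i ((\<lambda>(z, w). (g z - \<delta> * w, z)) ` V))"
proof (intro allI impI)
  fix D assume "il_disk x r i l D"
  then obtain \<phi> where hol\<phi>: "\<phi> holomorphic_on ball (x i) r"
    and Deq: "D = (\<lambda>z. (z, \<phi> z)) ` ball (x i) r" and sD: "snd ` D \<subseteq> ball (x l) r"
    unfolding il_disk_def by blast
  have \<phi>in: "\<phi> z \<in> ball (x l) r" if "z \<in> ball (x i) r" for z
    using sD that unfolding Deq image_image by (auto simp del: mem_ball simp: image_subset_iff)
  define c where "c = x j + \<delta> * x l"
  define B where "B = ball c R"
  have holg: "g holomorphic_on UNIV" by fact
  obtain h where holh: "h holomorphic_on B" and hB: "h ` B = W" and hg: "\<And>z. z \<in> W \<Longrightarrow> h (g z) = z"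
    and gh: "\<And>u. u \<in> B \<Longrightarrow> g (h u) = u" and gW: "g ` W = B"
    using assms(11) unfolding biholo_onto_def B_def c_def by blast
  have WB: "W \<subseteq> ball (x i) r" by fact
  have hin: "h u \<in> ball (x i) r" if "u \<in> B" for u using hB WB that by blast
  have hol\<phi>h: "(\<lambda>u. \<phi> (h u)) holomorphic_on B"
    using holomorphic_on_compose_gen[OF holh hol\<phi>] hin by (auto simp: o_def image_subset_iff simp del: mem_ball)
  define \<Phi> where "\<Phi> = (\<lambda>u. u - \<delta> * \<phi> (h u))"
  have hol\<Phi>: "\<Phi> holomorphic_on B" unfolding \<Phi>_def by (intro holomorphic_intros hol\<phi>h)
  have R0: "0 < R" using assms by linarith
  have fbound: "dist c (w + \<delta> * \<phi> (h u)) \<le> dist (x j) w + norm \<delta> * r" if "u \<in> B" for u w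
  proof -
    have "c - (w + \<delta> * \<phi> (h u)) = (x j - w) + \<delta> * (x l - \<phi> (h u))" unfolding c_def by (simp add: algebra_simps)
    then have "dist c (w + \<delta> * \<phi> (h u)) \<le> norm (x j - w) + norm \<delta> * norm (x l - \<phi> (h u))"
      by (metis dist_norm norm_mult norm_triangle_ineq)
    moreover have "norm (x l - \<phi> (h u)) \<le> r" using \<phi>in[OF hin[OF that]] by (simp add: dist_norm)
    ultimately show ?thesis by (smt (verit, best) dist_norm mult_left_mono norm_ge_zero)
  qed
  have exist: "\<exists>u\<in>B. \<Phi> u = w" if w: "w \<in> ball (x j) r" for w
  proof -
    define \<rho> where "\<rho> = dist (x j) w + norm \<delta> * r"
    have \<rho>R: "\<rho> < R" using w assms(5) unfolding \<rho>_def by simp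
    have \<rho>0: "0 \<le> \<rho>" unfolding \<rho>_def using assms(3) by simp
    have cbB: "cball c \<rho> \<subseteq> B" unfolding B_def using \<rho>R by auto
    have cont: "continuous_on (cball c \<rho>) (\<lambda>u. w + \<delta> * \<phi> (h u))"
      by (intro continuous_intros holomorphic_on_imp_continuous_on holomorphic_on_subset[OF hol\<phi>h cbB])
    obtain u where u: "u \<in> cball c \<rho>" "w + \<delta> * \<phi> (h u) = u"
      apply (rule brouwer[OF compact_cball convex_cball _ cont])
      using \<rho>0 apply simp
      using fbound cbB unfolding \<rho>_def apply auto[1]
      by blast
    then have "u \<in> B" "\<Phi> u = w" using cbB unfolding \<Phi>_def by (auto simp: algebra_simps)
    then show ?thesis by blast
  qed
  have uniq: "u1 = u2" if "u1 \<in> B" "u2 \<in> B" "\<Phi> u1 = w" "\<Phi> u2 = w" "w \<in> ball (x j) r" for u1 u2 w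
  proof (rule ball_unique[of "\<lambda>u. w + \<delta> * \<phi> (h u)" c R "dist (x j) w + norm \<delta> * r"])
    show "(\<lambda>u. w + \<delta> * \<phi> (h u)) holomorphic_on ball c R" using hol\<phi>h unfolding B_def
      by (intro holomorphic_intros)
    show "0 < R" by fact
    show "dist (x j) w + cmod \<delta> * r < R" using that(5) assms(5) by simp
    show "\<And>u. u \<in> ball c R \<Longrightarrow> dist c (w + \<delta> * \<phi> (h u)) \<le> dist (x j) w + cmod \<delta> * r"
      using fbound unfolding B_def by blast
    show "u1 \<in> ball c R" "u2 \<in> ball c R" using that unfolding B_def by auto
    show "w + \<delta> * \<phi> (h u1) = u1" "w + \<delta> * \<phi> (h u2) = u2" using that(3,4) unfolding \<Phi>_def by (auto simp: algebra_simps)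
  qed
  define U where "U = B \<inter> \<Phi> -` ball (x j) r"
  have openU: "open U" unfolding U_def B_def
    by (rule continuous_open_preimage[OF holomorphic_on_imp_continuous_on]) (use hol\<Phi> B_def in auto)
  have injU: "inj_on \<Phi> U" unfolding U_def using uniq by (auto simp: inj_on_def)
  have \<Phi>U: "\<Phi> ` U = ball (x j) r" unfolding U_def using exist by (fastforce intro: image_eqI)
  have "U \<subseteq> B" unfolding U_def by auto
  have "\<exists>\<Psi>. \<Psi> holomorphic_on (\<Phi> ` U) \<and> (\<forall>z\<in>U. \<Psi> (\<Phi> z) = z)"
  proof (rule holomorphic_has_inverse[OF holomorphic_on_subset[OF hol\<Phi> \<open>U \<subseteq> B\<close>] openU injU])
    fix G assume "G holomorphic_on \<Phi> ` U" "\<And>z. z \<in> U \<Longrightarrow> G (\<Phi> z) = z"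
    then show "\<exists>\<Psi>. \<Psi> holomorphic_on (\<Phi> ` U) \<and> (\<forall>z\<in>U. \<Psi> (\<Phi> z) = z)" by blast
  qed
  then obtain \<Psi> where hol\<Psi>: "\<Psi> holomorphic_on (\<Phi> ` U)" and \<Psi>\<Phi>: "\<And>z. z \<in> U \<Longrightarrow> \<Psi> (\<Phi> z) = z"
    by blast
  have \<Psi>in: "\<Psi> w \<in> U" "\<Phi> (\<Psi> w) = w" if "w \<in> ball (x j) r" for w
  proof -
    have "w \<in> \<Phi> ` U" using that \<Phi>U by simp
    then obtain u where u: "u \<in> U" "w = \<Phi> u" by (rule imageE)
    then have "\<Psi> w = u" using \<Psi>\<Phi>[OF u(1)] by simp
    then show "\<Psi> w \<in> U" "\<Phi> (\<Psi> w) = w" using u by simp_all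
  qed
  define \<kappa> where "\<kappa> = h \<circ> \<Psi>"
  have hol\<kappa>: "\<kappa> holomorphic_on ball (x j) r" unfolding \<kappa>_def
    by (rule holomorphic_on_compose_gen[OF hol\<Psi>[unfolded \<Phi>U] holh]) (use \<Psi>in(1) \<open>U \<subseteq> B\<close> in fast)
  define \<psi> where "\<psi> = (\<lambda>z. g z - \<delta> * \<phi> z)"
  have \<kappa>\<psi>: "\<kappa> (\<psi> z) = z" if "z \<in> W" "\<psi> z \<in> ball (x j) r" for z
  proof -
    have u: "g z \<in> B" using gW that by blast
    have "\<Phi> (g z) = \<psi> z" unfolding \<Phi>_def \<psi>_def using hg that by simp
    then have "g z \<in> U" using u that(2) unfolding U_def by simp
    then have "\<Psi> (\<Phi> (g z)) = g z" by (rule \<Psi>\<Phi>)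
    then have "\<Psi> (\<psi> z) = g z" using \<open>\<Phi> (g z) = \<psi> z\<close> by simp
    then show ?thesis unfolding \<kappa>_def using hg that by simp
  qed
  have \<psi>\<kappa>: "\<psi> (\<kappa> w) = w" "\<kappa> w \<in> W" if "w \<in> ball (x j) r" for w
  proof -
    have "\<Psi> w \<in> B" using \<Psi>in(1)[OF that] \<open>U \<subseteq> B\<close> by blast
    then have "g (h (\<Psi> w)) = \<Psi> w" "h (\<Psi> w) \<in> W" using gh hB by blast+
    then show "\<psi> (\<kappa> w) = w" "\<kappa> w \<in> W" unfolding \<kappa>_def \<psi>_def using \<Psi>in(2)[OF that]
      by (simp_all add: \<Phi>_def)
  qed
  define W' where "W' = \<kappa> ` ball (x j) r"
  have W'eq: "W' = W \<inter> \<psi> -` ball (x j) r"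
  proof
    show "W' \<subseteq> W \<inter> \<psi> -` ball (x j) r" unfolding W'_def using \<psi>\<kappa> by auto
    show "W \<inter> \<psi> -` ball (x j) r \<subseteq> W'"
    proof
      fix z assume z: "z \<in> W \<inter> \<psi> -` ball (x j) r"
      then have "\<kappa> (\<psi> z) = z" using \<kappa>\<psi> by blast
      then show "z \<in> W'" unfolding W'_def using z by (metis IntD2 image_eqI vimageE)
    qed
  qed
  have openW: "open W" using assms(9) unfolding domain_def by simp
  have cont\<psi>: "continuous_on W \<psi>" unfolding \<psi>_def
    by (intro continuous_intros holomorphic_on_imp_continuous_on
        holomorphic_on_subset[OF holg] holomorphic_on_subset[OF hol\<phi> WB]) auto
  have domW': "domain W'" unfolding domain_def
  proof (intro conjI)
    show "open W'" unfolding W'eq by (rule continuous_open_preimage[OF cont\<psi> openW]) auto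
    show "connected W'" unfolding W'_def
      by (rule connected_continuous_image[OF holomorphic_on_imp_continuous_on[OF hol\<kappa>]]) auto
    show "W' \<noteq> {}" unfolding W'_def using assms(3) by simp
  qed
  have W'W: "W' \<subseteq> W" unfolding W'eq by auto
  define V where "V = D \<inter> (W' \<times> UNIV)"
  have W'i: "W' \<subseteq> ball (x i) r" using W'W WB by blast
  have Veq: "V = (\<lambda>z. (z, \<phi> z)) ` W'" unfolding V_def Deq using W'i by blast
  have "\<phi> holomorphic_on W'" using holomorphic_on_subset[OF hol\<phi>] W'W WB by blast
  then have "holo_disk V" unfolding holo_disk_def using domW' Veq by blast
  moreover have "il_disk x r j i ((\<lambda>(z, w). (g z - \<delta> * w, z)) ` V)"
    unfolding il_disk_def
  proof (intro exI conjI)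
    show "\<kappa> holomorphic_on ball (x j) r" by fact
    have "(\<lambda>(z, w). (g z - \<delta> * w, z)) ` V = (\<lambda>z. (\<psi> z, z)) ` W'"
      unfolding Veq image_image \<psi>_def by simp
    also have "\<dots> = (\<lambda>w. (w, \<kappa> w)) ` ball (x j) r"
    proof (intro equalityI subsetI)
      fix p assume "p \<in> (\<lambda>z. (\<psi> z, z)) ` W'"
      then obtain z where z: "z \<in> W'" "p = (\<psi> z, z)" by blast
      then have "\<psi> z \<in> ball (x j) r" "\<kappa> (\<psi> z) = z" using W'eq \<kappa>\<psi> by auto
      then show "p \<in> (\<lambda>w. (w, \<kappa> w)) ` ball (x j) r" using z by force
    next
      fix p assume "p \<in> (\<lambda>w. (w, \<kappa> w)) ` ball (x j) r"
      then obtain w where w: "w \<in> ball (x j) r" "p = (w, \<kappa> w)" by blast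
      then have "\<kappa> w \<in> W'" "\<psi> (\<kappa> w) = w" unfolding W'_def using \<psi>\<kappa> by auto
      then show "p \<in> (\<lambda>z. (\<psi> z, z)) ` W'" using w by force
    qed
    finally show "(\<lambda>(z, w). (g z - \<delta> * w, z)) ` V = (\<lambda>w. (w, \<kappa> w)) ` ball (x j) r" .
    show "snd ` (\<lambda>(z, w). (g z - \<delta> * w, z)) ` V \<subseteq> ball (x i) r"
      using W'i unfolding Veq image_image by (auto simp del: mem_ball)
  qed
  moreover have "V \<subseteq> D" unfolding V_def by blast
  ultimately show "\<exists>W' V. domain W' \<and> W' \<subseteq> W \<and> V = D \<inter> (W' \<times> UNIV) \<and>
              holo_disk V \<and> V \<subseteq> D \<and>
              il_disk x r j i ((\<lambda>(z, w). (g z - \<delta> * w, z)) ` V)"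
    using domW' W'W V_def by blast
qed

end
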